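(* For $n\ge1$ let $c(n)$ be the number of nonempty words $\omega$ such that $\omega\omega\omega$ is a suffix of $\mathbb{T}[1,n]$ and $\omega\omega\omega$ is not a factor of $\mathbb{T}[1,n-1]$. Then $c(n)=0$ for $n\leq57$; for $n\geq58$, let $m$ be such that $t_{m-1}+2t_{m-4}\leq n<t_{m}+2t_{m-3}$; then $m\geq7$ and $c(n)=1$ if and only if $n\leq t_{m-1}+k_{m+1}-2$.
   Context: The Tribonacci sequence $\mathbb{T}=x_1x_2x_3\cdots$ is the fixed point (infinite word starting with $a$) of the substitution $\sigma(a)=ab$, $\sigma(b)=ac$, $\sigma(c)=a$ over $\{a,b,c\}$. For $n\ge1$, $\mathbb{T}[1,n]=x_1\cdots x_n$ is its prefix of length $n$. The Tribonacci numbers are $t_m=|\sigma^m(a)|$ for $m\ge0$, with $t_{-2}=0$, $t_{-1}=1$; thus $t_0=1,t_1=2,t_2=4$ and $t_m=t_{m-1}+t_{m-2}+t_{m-3}$. The kernel numbers are $k_0=0$, $k_1=k_2=1$, $k_m=k_{m-1}+k_{m-2}+k_{m-3}-1$ for $m\ge3$. *)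

theory Defs
  imports Main "HOL-Library.Sublist"
begin

datatype letter = A | B | C

fun sigma_letter :: "letter \<Rightarrow> letter list" where
  "sigma_letter A = [A, B]"
| "sigma_letter B = [A, C]"
| "sigma_letter C = [A]"

definition sigma :: "letter list \<Rightarrow> letter list" where
  "sigma w = concat (map sigma_letter w)"

text \<open>The i-th letter (1-indexed) of the Tribonacci word: the i-th letter of sigma^i(a),
  which has length t_i > i and is a prefix of the fixed point.\<close>
definition trib_letter :: "nat \<Rightarrow> letter" where
  "trib_letter i = (sigma ^^ i) [A] ! (i - 1)"

definition trib_prefix :: "nat \<Rightarrow> letter list" where
  "trib_prefix n = map trib_letter [1..<n+1]"

definition tnum :: "int \<Rightarrow> int" where
  "tnum m = (if m = -2 then 0 else if m = -1 then 1
             else int (length ((sigma ^^ nat m) [A])))"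

fun knum :: "nat \<Rightarrow> int" where
  "knum 0 = 0"
| "knum (Suc 0) = 1"
| "knum (Suc (Suc 0)) = 1"
| "knum (Suc (Suc (Suc m))) = knum (Suc (Suc m)) + knum (Suc m) + knum m - 1"

definition cube_count :: "nat \<Rightarrow> nat" where
  "cube_count n = card {w. w \<noteq> [] \<and> suffix (w @ w @ w) (trib_prefix n)
                          \<and> \<not> sublist (w @ w @ w) (trib_prefix (n - 1))}"

end

theory Submission
  imports Defs
begin

abbreviation T :: "nat \<Rightarrow> letter list" where "T n \<equiv> (sigma ^^ n) [A]"

lemma sigma_Nil[simp]: "sigma [] = []" by (simp add: sigma_def)
lemma sigma_Cons[simp]: "sigma (a # u) = sigma_letter a @ sigma u" by (simp add: sigma_def)
lemma sigma_append[simp]: "sigma (u @ v) = sigma u @ sigma v" by (simp add: sigma_def)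

lemma len_sigma_ge: "length u \<le> length (sigma u)"
proof (induction u)
  case (Cons a u) then show ?case by (cases a) auto
qed simp

lemma sigma_prefix: "prefix u v \<Longrightarrow> prefix (sigma u) (sigma v)"
  by (auto simp: prefix_def)

lemma T_Suc: "T (Suc n) = sigma (T n)" by simp

lemma T_prefix_Suc: "prefix (T n) (T (Suc n))"
proof (induction n)
  case 0 then show ?case by (simp add: sigma_def)
next
  case (Suc n)
  then show ?case using sigma_prefix by (metis T_Suc)
qed

lemma T_prefix_mono: "n \<le> m \<Longrightarrow> prefix (T n) (T m)"
proof (induction m rule: dec_induct)
  case (step m) then show ?case using T_prefix_Suc prefix_order.trans by blast
qed simp

lemma T_hd: "\<exists>r. T n = A # r"
proof (induction n)
  case 0 then show ?case by simp
next
  case (Suc n) then obtain r where "T n = A # r" by blast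
  then show ?case by (simp add: T_Suc)
qed

lemma T_len: "n < length (T n)"
proof (induction n)
  case 0 then show ?case by simp
next
  case (Suc n) then obtain r where r: "T n = A # r" using T_hd by blast
  have "length (T (Suc n)) = 2 + length (sigma r)" by (simp add: T_Suc r)
  moreover have "length (sigma r) \<ge> length r" by (rule len_sigma_ge)
  ultimately show ?case using Suc r by simp
qed

definition xw :: "nat \<Rightarrow> letter" where "xw i = trib_letter (Suc i)"

lemma xw_T: assumes "i < length (T m)" shows "T m ! i = xw i"
proof -
  let ?N = "max m (Suc i)"
  have p1: "prefix (T m) (T ?N)" by (rule T_prefix_mono) simp
  have p2: "prefix (T (Suc i)) (T ?N)" by (rule T_prefix_mono) simp
  have "i < length (T (Suc i))" using T_len[of "Suc i"] by simp
  then have "T (Suc i) ! i = T ?N ! i" using p2 by (metis prefix_def nth_append)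
  moreover have "T m ! i = T ?N ! i" using p1 assms by (metis prefix_def nth_append)
  ultimately show ?thesis by (simp add: xw_def trib_letter_def)
qed

definition pref :: "nat \<Rightarrow> letter list" where "pref n = map xw [0..<n]"

lemma pref_take: "n \<le> length (T m) \<Longrightarrow> pref n = take n (T m)"
  by (rule nth_equalityI) (auto simp: pref_def xw_T)

definition tn :: "nat \<Rightarrow> nat" where "tn j = length (T j)"

lemma pref_T: "pref (tn m) = T m" using pref_take[of "length (T m)" m] by (simp add: tn_def)

definition pos :: "nat \<Rightarrow> nat" where "pos k = length (sigma (pref k))"

lemma prefix_take_eq: "prefix u v \<Longrightarrow> u = take (length u) v"
  by (auto simp: prefix_def)

lemma pref_pos: "pref (pos k) = sigma (pref k)"
proof -
  have k: "k \<le> length (T k)" using T_len[of k] by simp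
  have "pref k = take k (T k)" using k by (rule pref_take)
  then have "prefix (pref k) (T k)" by (simp add: take_is_prefix)
  then have pp: "prefix (sigma (pref k)) (T (Suc k))" by (simp add: sigma_prefix)
  then have "pos k \<le> length (T (Suc k))" by (simp add: pos_def prefix_length_le)
  then have "pref (pos k) = take (pos k) (T (Suc k))" by (rule pref_take)
  also have "\<dots> = sigma (pref k)" using prefix_take_eq[OF pp] by (simp add: pos_def)
  finally show ?thesis .
qed

lemma pref_add: "pref (a + b) = pref a @ map xw [a..<a+b]"
  using upt_add_eq_append[of 0 a b] by (simp add: pref_def)

lemma pos_add: "pos (u + n) = pos u + length (sigma (map xw [u..<u+n]))"
  by (simp add: pos_def pref_add)

lemma seg_sigma: "map xw [pos u..<pos (u+n)] = sigma (map xw [u..<u+n])"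
proof -
  have "pref (pos (u+n)) = pref (pos u) @ sigma (map xw [u..<u+n])"
    by (simp add: pref_pos pref_add)
  moreover have "pref (pos (u+n)) = pref (pos u) @ map xw [pos u..<pos (u+n)]"
    using pref_add[of "pos u" "pos (u+n) - pos u"] pos_add[of u n] by simp
  ultimately show ?thesis by simp
qed

definition blen :: "letter \<Rightarrow> nat" where "blen l = length (sigma_letter l)"

lemma pos_Suc: "pos (Suc k) = pos k + blen (xw k)"
  using pos_add[of k 1] by (simp add: blen_def)

lemma xw_block: "r < blen (xw k) \<Longrightarrow> xw (pos k + r) = sigma_letter (xw k) ! r"
proof -
  assume r: "r < blen (xw k)"
  have "map xw [pos k..<pos (k+1)] = sigma_letter (xw k)" using seg_sigma[of k 1] by simp
  moreover have "pos (k+1) = pos k + blen (xw k)" using pos_Suc by simp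
  ultimately show ?thesis using r
    by (metis add_diff_cancel_left' blen_def length_map length_upt nth_map_upt)
qed


fun nx :: "letter \<Rightarrow> letter" where "nx A = B" | "nx B = C" | "nx C = A"

lemma nx_inj: "nx a = nx b \<Longrightarrow> a = b" by (cases a; cases b) auto

lemma blen_eq: "blen l = (if l = C then 1 else 2)" by (cases l) (auto simp: blen_def)

lemma pos_0[simp]: "pos 0 = 0" by (simp add: pos_def pref_def)

lemma pos_less_Suc: "pos k < pos (Suc k)" by (simp add: pos_Suc blen_eq)

lemma pos_strict: "strict_mono pos" by (simp add: strict_mono_Suc_iff pos_less_Suc)

lemma pos_less_iff[simp]: "pos a < pos b \<longleftrightarrow> a < b" using pos_strict strict_mono_less by blast
lemma pos_le_iff[simp]: "pos a \<le> pos b \<longleftrightarrow> a \<le> b" using pos_strict strict_mono_less_eq by blast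
lemma pos_eq_iff[simp]: "pos a = pos b \<longleftrightarrow> a = b" using pos_strict strict_mono_eq by blast

lemma pos_ge: "k \<le> pos k" using pos_strict by (simp add: strict_mono_imp_increasing)

lemma pos_gap1: "k \<le> k' \<Longrightarrow> pos k + k' \<le> pos k' + k"
proof (induction k' rule: dec_induct)
  case (step n) then show ?case using pos_less_Suc[of n] by linarith
qed simp

lemma xw_pos: "xw (pos k) = A"
  using xw_block[of 0 k] by (cases "xw k") (auto simp: blen_def)

lemma xw_pos1: "xw (pos k + 1) = nx (xw k)"
proof (cases "xw k = C")
  case True
  then have "pos k + 1 = pos (Suc k)" by (simp add: pos_Suc blen_eq)
  then show ?thesis using True xw_pos by simp
next
  case False
  then show ?thesis using xw_block[of 1 k] by (cases "xw k") (auto simp: blen_def)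
qed

lemma xw_last: "xw (pos (Suc k) - 1) = nx (xw k)"
proof (cases "xw k = C")
  case True
  then have "pos (Suc k) - 1 = pos k" by (simp add: pos_Suc blen_eq)
  then show ?thesis using True xw_pos by simp
next
  case False
  then have "pos (Suc k) - 1 = pos k + 1" by (simp add: pos_Suc blen_eq)
  then show ?thesis using xw_pos1 by simp
qed

lemma pos_cover: "\<exists>k. pos k \<le> y \<and> y < pos (Suc k)"
proof -
  have ex: "\<exists>k. y < pos k" using pos_ge[of "Suc y"] by (rule_tac x="Suc y" in exI) simp
  define k0 where "k0 = (LEAST k. y < pos k)"
  have k0: "y < pos k0" unfolding k0_def using ex by (rule LeastI_ex)
  have "k0 \<noteq> 0"
  proof assume "k0 = 0" with k0 show False by simp qed
  then obtain k where k: "k0 = Suc k" by (cases k0) auto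
  have "\<not> y < pos k" using k k0_def not_less_Least by (metis lessI)
  then show ?thesis using k0 k by (metis not_less)
qed

lemma pos_cover2: "pos k \<le> y \<Longrightarrow> y < pos (Suc k) \<Longrightarrow> y = pos k \<or> (y = pos k + 1 \<and> xw k \<noteq> C \<and> pos (Suc k) = pos k + 2)"
  by (auto simp: pos_Suc blen_eq split: if_splits)

lemma xw_A_iff: "xw y = A \<longleftrightarrow> (\<exists>k. y = pos k)"
proof
  assume a: "xw y = A"
  obtain k where k: "pos k \<le> y" "y < pos (Suc k)" using pos_cover by blast
  from pos_cover2[OF k] show "\<exists>k. y = pos k"
  proof
    assume "y = pos k" then show ?thesis by blast
  next
    assume h: "y = pos k + 1 \<and> xw k \<noteq> C \<and> pos (Suc k) = pos k + 2"
    then have "xw y = nx (xw k)" using xw_pos1 by simp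
    with a h show ?thesis by (cases "xw k") auto
  qed
next
  assume "\<exists>k. y = pos k" then show "xw y = A" using xw_pos by auto
qed

lemma nonA_struct: assumes "xw y \<noteq> A"
  shows "\<exists>k. y = pos k + 1 \<and> xw k \<noteq> C \<and> pos (Suc k) = pos k + 2"
proof -
  obtain k where k: "pos k \<le> y" "y < pos (Suc k)" using pos_cover by blast
  from pos_cover2[OF k] assms show ?thesis using xw_pos by auto
qed

lemma nonA_prev: "xw y \<noteq> A \<Longrightarrow> 1 \<le> y \<and> xw (y - 1) = A"
  using nonA_struct xw_pos by fastforce

lemma nonA_next: "xw y \<noteq> A \<Longrightarrow> xw (Suc y) = A"
proof -
  assume "xw y \<noteq> A"
  then obtain k where "y = pos k + 1" "pos (Suc k) = pos k + 2" using nonA_struct by blast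
  then have "Suc y = pos (Suc k)" by simp
  then show ?thesis using xw_pos by simp
qed

lemma C_next: "xw k = C \<Longrightarrow> xw (Suc k) = A"
  using nonA_next by fastforce

lemma pos_add2: "pos k + 3 \<le> pos (k + 2)"
proof -
  have "pos (k+2) = pos k + blen (xw k) + blen (xw (Suc k))"
    using pos_Suc[of k] pos_Suc[of "Suc k"] by simp
  moreover have "blen (xw k) + blen (xw (Suc k)) \<ge> 3"
    using C_next[of k] by (auto simp: blen_eq)
  ultimately show ?thesis by simp
qed

lemma pos_gap2: "2 \<le> m \<Longrightarrow> pos k + m + 1 \<le> pos (k + m)"
proof (induction m rule: dec_induct)
  case base then show ?case using pos_add2[of k] by simp
next
  case (step n) then show ?case using pos_less_Suc[of "k+n"] by (simp del: pos_less_iff)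
qed

lemma xw_0: "xw 0 = A" using xw_pos[of 0] by simp

lemma AA_C: assumes "xw y = A" "xw (Suc y) = A" shows "\<exists>q. y = pos q \<and> xw q = C"
proof -
  obtain q where q: "y = pos q" using assms xw_A_iff by blast
  obtain q' where q': "Suc y = pos q'" using assms xw_A_iff by blast
  have "q < q'" using q q' pos_less_iff by (metis lessI)
  then have "pos (Suc q) \<le> pos q'" by simp
  then have "pos (Suc q) = pos q + 1" using q q' pos_less_Suc[of q] by linarith
  then have "xw q = C" by (simp add: pos_Suc blen_eq split: if_splits)
  then show ?thesis using q by blast
qed

lemma noAAA: assumes "xw y = A" "xw (Suc y) = A" shows "xw (Suc (Suc y)) \<noteq> A"
proof -
  obtain q where q: "y = pos q" "xw q = C" using AA_C assms by blast
  then have s: "Suc y = pos (Suc q)" by (simp add: pos_Suc blen_eq)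
  have "xw (Suc q) = A" using C_next q by simp
  then have "xw (pos (Suc q) + 1) = B" using xw_pos1 by simp
  then show ?thesis using s by simp
qed


definition per :: "nat \<Rightarrow> nat \<Rightarrow> nat \<Rightarrow> bool" where
  "per i p d \<longleftrightarrow> (\<forall>y<d. xw (i + y) = xw (i + y + p))"

definition leftmax :: "nat \<Rightarrow> nat \<Rightarrow> bool" where
  "leftmax i p \<longleftrightarrow> (i = 0 \<or> xw (i - 1) \<noteq> xw (i - 1 + p))"

lemma BC: assumes "per u p' d'" "v \<le> d'"
  shows "pos (u + v + p') = pos (u + v) + (pos (u + p') - pos u)"
  using assms(2)
proof (induction v)
  case 0 then show ?case using pos_le_iff[of u "u+p'"] by simp
next
  case (Suc v)
  then have e: "xw (u + v) = xw (u + v + p')" using assms(1) by (simp add: per_def)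
  have "pos (u + Suc v + p') = pos (u + v + p') + blen (xw (u + v + p'))"
    using pos_Suc[of "u+v+p'"] by simp
  also have "\<dots> = pos (u + v) + (pos (u + p') - pos u) + blen (xw (u+v))"
    using Suc e by simp
  also have "\<dots> = pos (u + Suc v) + (pos (u + p') - pos u)"
  proof -
    have a: "pos (u + Suc v) = pos (u+v) + blen (xw (u+v))" using pos_Suc[of "u+v"] by simp
    have b: "pos u \<le> pos (u+p')" using pos_le_iff by simp
    show ?thesis using a b by linarith
  qed
  finally show ?case .
qed

lemma lift: assumes "per u p' d'"
  shows "per (pos u) (pos (u + p') - pos u) (pos (u + d') - pos u + 1)"
  unfolding per_def
proof (intro allI impI)
  fix y assume y: "y < pos (u + d') - pos u + 1"
  let ?p = "pos (u + p') - pos u"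
  let ?Y = "pos u + y"
  have ud: "pos u \<le> pos (u + d')" by simp
  show "xw (pos u + y) = xw (pos u + y + ?p)"
  proof (cases "?Y = pos (u + d')")
    case True
    have "pos (u + d' + p') = pos (u + d') + ?p" using BC[OF assms, of d'] by simp
    then have "?Y + ?p = pos (u + d' + p')" using True by simp
    then show ?thesis using True xw_pos by simp
  next
    case False
    then have Yl: "?Y < pos (u + d')" using y ud by linarith
    obtain k where k: "pos k \<le> ?Y" "?Y < pos (Suc k)" using pos_cover by blast
    have ku: "u \<le> k"
    proof (rule ccontr)
      assume "\<not> u \<le> k" then have "Suc k \<le> u" by simp
      then have "pos (Suc k) \<le> pos u" using pos_le_iff by blast
      then show False using k by linarith
    qed
    have kd: "k < u + d'"
    proof (rule ccontr)
      assume "\<not> k < u + d'" then have "pos (u + d') \<le> pos k" using pos_le_iff not_less by blast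
      then show False using k Yl by linarith
    qed
    define v where "v = k - u"
    have kv: "k = u + v" using ku v_def by simp
    have vd: "v < d'" using kd kv by simp
    have e: "xw k = xw (k + p')" using assms vd kv by (simp add: per_def)
    have pk: "pos (k + p') = pos k + ?p" using BC[OF assms, of v] vd kv by simp
    define r where "r = ?Y - pos k"
    have r: "r < blen (xw k)" using k pos_Suc[of k] r_def by simp
    have "xw ?Y = sigma_letter (xw k) ! r" using xw_block[OF r] k r_def by simp
    moreover have "xw (?Y + ?p) = sigma_letter (xw (k + p')) ! r"
    proof -
      have r': "r < blen (xw (k+p'))" using r e by simp
      have "pos u \<le> pos (u+p')" by simp
      then have eq: "?Y + ?p = pos (k + p') + r" using pk k r_def by linarith
      show ?thesis by (simp only: eq xw_block[OF r'])
    qed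
    ultimately show ?thesis using e by simp
  qed
qed

lemma descent:
  assumes p2: "2 \<le> p" and d1: "1 \<le> d" and lm: "leftmax i p" and pr: "per i p d"
  shows "\<exists>u p' d'. i = pos u \<and> 1 \<le> p' \<and> p' < p \<and> pos (u + p') = pos u + p \<and>
           leftmax u p' \<and> per u p' d' \<and> d \<le> pos (u + d') + 1 - pos u"
proof -
  have e0: "xw i = xw (i + p)" using pr d1 unfolding per_def by (metis One_nat_def Suc_le_lessD add.right_neutral)
  have iA: "xw i = A"
  proof (rule ccontr)
    assume nA: "xw i \<noteq> A"
    then have i1: "1 \<le> i" and a1: "xw (i - 1) = A" using nonA_prev by auto
    have "xw (i + p) \<noteq> A" using nA e0 by simp
    then have "xw (i + p - 1) = A" using nonA_prev by auto
    moreover have "i + p - 1 = i - 1 + p" using i1 by simp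
    ultimately show False using lm a1 i1 by (simp add: leftmax_def)
  qed
  obtain u where u: "i = pos u" using iA xw_A_iff by blast
  have "xw (i + p) = A" using iA e0 by simp
  then obtain w' where w': "i + p = pos w'" using xw_A_iff by blast
  have "pos u < pos w'" using u w' p2 by linarith
  then have uw: "u < w'" using pos_less_iff by blast
  define p' where "p' = w' - u"
  have wp: "w' = u + p'" using uw p'_def by simp
  have p'1: "1 \<le> p'" using uw p'_def by simp
  have pp: "pos (u + p') = pos u + p" using w' wp u by simp
  have p'p: "p' < p"
  proof (cases "2 \<le> p'")
    case True then have "pos u + p' + 1 \<le> pos (u + p')" by (rule pos_gap2)
    then show ?thesis using pp by simp
  next
    case False then show ?thesis using p'1 p2 by simp
  qed
  have key: "\<And>v. pos (u + v) + 1 < i + d \<Longrightarrow>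
      pos (u + v + p') = pos (u + v) + p \<and> xw (u + v) = xw (u + v + p')"
  proof -
    fix v show "pos (u + v) + 1 < i + d \<Longrightarrow> pos (u + v + p') = pos (u + v) + p \<and> xw (u + v) = xw (u + v + p')"
    proof (induction v)
      case 0
      have h1: "1 < d" using 0 u by simp
      have "xw (i + 1) = xw (i + 1 + p)" using pr h1 unfolding per_def by blast
      then have z1: "xw (pos u + 1) = xw (pos u + 1 + p)" using u by simp
      have "xw (pos u + 1) = nx (xw u)" by (rule xw_pos1)
      moreover have "xw (pos u + 1 + p) = nx (xw (u + p'))" using xw_pos1[of "u+p'"] pp by (simp add: add.commute add.left_commute)
      ultimately show ?case using z1 pp nx_inj by simp
    next
      case (Suc v)
      have "pos (u + v) < pos (u + Suc v)" by simp
      then have "pos (u + v) + 1 < i + d" using Suc.prems by linarith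
      then have IH: "pos (u + v + p') = pos (u + v) + p" "xw (u + v) = xw (u + v + p')" using Suc.IH by auto
      have P: "pos (u + Suc v + p') = pos (u + Suc v) + p"
        using pos_Suc[of "u+v+p'"] pos_Suc[of "u+v"] IH by simp
      let ?z = "pos (u + Suc v)"
      have zi: "i \<le> ?z" using u by simp
      have yd: "?z + 1 - i < d" using Suc.prems zi by linarith
      have "xw (i + (?z + 1 - i)) = xw (i + (?z + 1 - i) + p)" using pr yd by (simp add: per_def)
      then have z1: "xw (?z + 1) = xw (?z + 1 + p)" using zi by simp
      have "xw (?z + 1) = nx (xw (u + Suc v))" by (rule xw_pos1)
      moreover have "xw (?z + 1 + p) = nx (xw (u + Suc v + p'))" using xw_pos1[of "u + Suc v + p'"] P
        by (simp add: add.commute add.left_commute)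
      ultimately show ?case using z1 P nx_inj by simp
    qed
  qed
  have exd: "\<exists>k. i + d \<le> pos (u + k) + 1"
  proof -
    have "pos u + d \<le> pos (u + d)" using pos_gap1[of u "u+d"] by simp
    then show ?thesis using u by (rule_tac x=d in exI) simp
  qed
  define d' where "d' = (LEAST k. i + d \<le> pos (u + k) + 1)"
  have d'1: "i + d \<le> pos (u + d') + 1" unfolding d'_def using exd by (rule LeastI_ex)
  have d'2: "\<And>v. v < d' \<Longrightarrow> pos (u + v) + 1 < i + d"
    using not_less_Least d'_def by (metis not_le)
  have perd: "per u p' d'" unfolding per_def using key d'2 by (simp add: add.assoc)
  have lmu: "leftmax u p'"
  proof (cases "u = 0")
    case True then show ?thesis by (simp add: leftmax_def)
  next
    case False
    then obtain u0 where u0: "u = Suc u0" by (cases u) auto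
    have ipos: "i \<noteq> 0" using u u0 pos_less_iff[of 0 u] by simp
    then have ne: "xw (i - 1) \<noteq> xw (i - 1 + p)" using lm by (simp add: leftmax_def)
    have "xw (i - 1) = nx (xw u0)" using xw_last[of u0] u u0 by simp
    moreover have "i - 1 + p = pos (Suc (u0 + p')) - 1" using pp u u0 ipos by simp
    then have "xw (i - 1 + p) = nx (xw (u0 + p'))" using xw_last[of "u0+p'"] by simp
    ultimately have "xw u0 \<noteq> xw (u0 + p')" using ne by auto
    then show ?thesis using u0 by (simp add: leftmax_def)
  qed
  show ?thesis
    using u p'1 p'p pp lmu perd d'1 by (rule_tac x=u in exI, rule_tac x=p' in exI, rule_tac x=d' in exI) simp
qed


fun W :: "nat \<Rightarrow> letter list" where
  "W 0 = [A, A]"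
| "W (Suc j) = sigma (W j) @ [A]"

definition fs :: "nat \<Rightarrow> nat \<Rightarrow> nat" where "fs j q = (pos ^^ Suc j) q"

lemma fs_0: "fs 0 q = pos q" by (simp add: fs_def)
lemma fs_Suc: "fs (Suc j) q = pos (fs j q)" by (simp add: fs_def)

lemma upt_add2: "[a..<a+2] = [a, a+1]"
  by (simp add: numeral_2_eq_2 upt_rec)

lemma content: assumes q: "xw q = C"
  shows "map xw [fs j q..<fs j q + length (W j)] = W j"
proof (induction j)
  case 0
  have "xw (pos q + 1) = A" using xw_pos1[of q] q by simp
  then show ?case using xw_pos[of q] by (simp add: fs_0 upt_add2)
next
  case (Suc j)
  let ?u = "fs j q" and ?l = "length (W j)"
  have s: "map xw [pos ?u..<pos (?u + ?l)] = sigma (W j)" using seg_sigma[of ?u ?l] Suc by simp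
  have pl: "pos (?u + ?l) = pos ?u + length (sigma (W j))" using pos_add[of ?u ?l] Suc by simp
  have "map xw [pos ?u..<pos ?u + length (sigma (W j)) + 1] =
        map xw [pos ?u..<pos (?u + ?l)] @ [xw (pos (?u + ?l))]"
    using pl by simp
  also have "\<dots> = sigma (W j) @ [A]" using s xw_pos by simp
  finally show ?case by (simp add: fs_Suc)
qed

lemma take_W: "tn j \<le> length (W j) \<and> take (tn j) (W j) = T j"
proof (induction j)
  case 0 then show ?case by (simp add: tn_def)
next
  case (Suc j)
  then obtain rest where r: "W j = T j @ rest" by (metis append_take_drop_id)
  have "tn (Suc j) = length (sigma (T j))" by (simp add: tn_def)
  then show ?case using r by (simp add: T_Suc)
qed

lemma tn_pos: "1 \<le> tn j" using T_len[of j] by (simp add: tn_def)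

lemma fam_period: assumes q: "xw q = C"
  shows "pos (fs j q + tn j) - pos (fs j q) = tn (Suc j)"
proof -
  let ?u = "fs j q"
  have "map xw [?u..<?u + tn j] = take (tn j) (map xw [?u..<?u + length (W j)])"
    using take_W[of j] by (simp add: take_map take_upt)
  also have "\<dots> = T j" using content[OF q, of j] take_W[of j] by simp
  finally have "map xw [?u..<?u + tn j] = T j" .
  then show ?thesis using pos_add[of ?u "tn j"] by (simp add: tn_def)
qed

lemma fam_len: assumes q: "xw q = C"
  shows "length (W (Suc j)) = pos (fs j q + length (W j)) - pos (fs j q) + 1"
  using pos_add[of "fs j q" "length (W j)"] content[OF q, of j] by simp

lemma claim:
  "1 \<le> p \<Longrightarrow> leftmax i p \<Longrightarrow> per i p d \<Longrightarrow>
    d + 2 \<le> 2 * p \<or> (\<exists>j q. xw q = C \<and> i = fs j q \<and> p = tn j \<and> d + p \<le> length (W j))"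
proof (induction p arbitrary: i d rule: less_induct)
  case (less p)
  show ?case
  proof (cases "d = 0")
    case True then show ?thesis using less.prems by simp
  next
    case d0: False
    show ?thesis
    proof (cases "p = 1")
      case True
      have e: "xw i = xw (i + 1)" using less.prems(3) d0 True unfolding per_def by (metis add.right_neutral gr0I)
      have iA: "xw i = A"
      proof (rule ccontr)
        assume "xw i \<noteq> A" then have "xw (Suc i) = A" by (rule nonA_next)
        then show False using e \<open>xw i \<noteq> A\<close> by simp
      qed
      then have i1A: "xw (Suc i) = A" using e by simp
      obtain q where q: "i = pos q" "xw q = C" using AA_C[OF iA i1A] by blast
      have d1: "d \<le> 1"
      proof (rule ccontr)
        assume "\<not> d \<le> 1" then have "1 < d" by simp
        then have "xw (i + 1) = xw (i + 1 + 1)" using less.prems(3) True unfolding per_def by blast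
        then show False using noAAA[OF iA i1A] i1A by simp
      qed
      have "i = fs 0 q" using q by (simp add: fs_0)
      moreover have "p = tn 0" using True by (simp add: tn_def)
      moreover have "d + p \<le> length (W 0)" using d1 True by simp
      ultimately show ?thesis using q by blast
    next
      case False
      then have p2: "2 \<le> p" using less.prems(1) by simp
      obtain u p' d' where D: "i = pos u" "1 \<le> p'" "p' < p" "pos (u + p') = pos u + p"
        "leftmax u p'" "per u p' d'" "d \<le> pos (u + d') + 1 - pos u"
        using descent[OF p2 _ less.prems(2) less.prems(3)] d0 by (metis One_nat_def Suc_leI gr0I)
      have IH: "d' + 2 \<le> 2 * p' \<or> (\<exists>j q. xw q = C \<and> u = fs j q \<and> p' = tn j \<and> d' + p' \<le> length (W j))"
        using less.IH[OF D(3) D(2) D(5) D(6)] .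
      have pp: "pos (u + p') - pos u = p" using D(4) by simp
      show ?thesis
      proof (cases "d' + 2 \<le> 2 * p'")
        case True
        show ?thesis
        proof (cases "d' < p'")
          case True
          then have "pos (u + d') < pos (u + p')" by simp
          then have "d \<le> p" using D(4) D(7) by linarith
          then show ?thesis using p2 by simp
        next
          case False
          define m where "m = d' - p'"
          have md: "d' = m + p'" using False m_def by simp
          have m2: "2 \<le> p' - m" using \<open>d' + 2 \<le> 2 * p'\<close> md by simp
          have b: "pos (u + m + p') = pos (u + m) + p" using BC[OF D(6), of m] md pp by simp
          have g: "pos (u + m) + (p' - m) + 1 \<le> pos (u + m + (p' - m))" by (rule pos_gap2[OF m2])
          have "u + m + (p' - m) = u + p'" using m2 by simp
          then have "pos (u + m) + (p' - m) + 1 \<le> pos u + p" using g D(4) by simp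
          then have "pos (u + d') + 3 \<le> pos u + 2 * p" using b md m2 by (simp add: add.assoc)
          moreover have "pos u \<le> pos (u + d')" by simp
          ultimately have "d + 2 \<le> 2 * p" using D(7) by linarith
          then show ?thesis by simp
        qed
      next
        case False
        then obtain j q where J: "xw q = C" "u = fs j q" "p' = tn j" "d' + p' \<le> length (W j)" using IH by blast
        have ii: "i = fs (Suc j) q" using D(1) J(2) by (simp add: fs_Suc)
        have pt: "p = tn (Suc j)" using fam_period[OF J(1), of j] J pp by simp
        have b: "pos (u + d' + p') = pos (u + d') + p" using BC[OF D(6), of d'] pp by simp
        have "pos (u + d' + p') \<le> pos (u + length (W j))" using J(4) by simp
        moreover have "pos u \<le> pos (u + d')" by simp
        ultimately have "d + p \<le> pos (u + length (W j)) - pos u + 1" using D(7) b by linarith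
        then have "d + p \<le> length (W (Suc j))" using fam_len[OF J(1), of j] J(2) by simp
        then show ?thesis using J(1) ii pt by blast
      qed
    qed
  qed
qed

lemma fam_per: assumes q: "xw q = C"
  shows "per (fs j q) (tn j) (length (W j) - tn j)"
proof (induction j)
  case 0
  have "xw (pos q + 1) = A" using xw_pos1[of q] q by simp
  then show ?case using xw_pos[of q] by (simp add: per_def fs_0 tn_def)
next
  case (Suc j)
  let ?u = "fs j q" and ?d = "length (W j) - tn j"
  have L: "per (pos ?u) (pos (?u + tn j) - pos ?u) (pos (?u + ?d) - pos ?u + 1)" by (rule lift[OF Suc])
  have pt: "pos (?u + tn j) - pos ?u = tn (Suc j)" by (rule fam_period[OF q])
  have b: "pos (?u + ?d + tn j) = pos (?u + ?d) + tn (Suc j)" using BC[OF Suc, of ?d] pt by simp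
  have "?u + ?d + tn j = ?u + length (W j)" using take_W[of j] by simp
  then have "length (W (Suc j)) = pos (?u + ?d) + tn (Suc j) - pos ?u + 1" using fam_len[OF q, of j] b by simp
  moreover have "pos ?u \<le> pos (?u + ?d)" by simp
  ultimately have "pos (?u + ?d) - pos ?u + 1 = length (W (Suc j)) - tn (Suc j)" by linarith
  then show ?case using L pt by (simp add: fs_Suc)
qed


lemma funpow_sigma_append: "(sigma ^^ n) (u @ v) = (sigma ^^ n) u @ (sigma ^^ n) v"
  by (induction n) auto

lemma TA: "T (Suc n) = T n @ (sigma ^^ n) [B]"
proof -
  have "T (Suc n) = (sigma ^^ n) (sigma [A])" by (simp add: funpow_Suc_right del: funpow.simps)
  also have "sigma [A] = [A] @ [B]" by (simp add: sigma_def)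
  finally show ?thesis by (simp only: funpow_sigma_append)
qed

lemma TB: "(sigma ^^ Suc n) [B] = T n @ (sigma ^^ n) [C]"
proof -
  have "(sigma ^^ Suc n) [B] = (sigma ^^ n) (sigma [B])" by (simp add: funpow_Suc_right del: funpow.simps)
  also have "sigma [B] = [A] @ [C]" by (simp add: sigma_def)
  finally show ?thesis by (simp only: funpow_sigma_append)
qed

lemma TC: "(sigma ^^ Suc n) [C] = T n"
proof -
  have "(sigma ^^ Suc n) [C] = (sigma ^^ n) (sigma [C])" by (simp add: funpow_Suc_right del: funpow.simps)
  also have "sigma [C] = [A]" by (simp add: sigma_def)
  finally show ?thesis .
qed

lemma tn_rec: "tn (n + 3) = tn (n + 2) + tn (n + 1) + tn n"
proof -
  have "T (n+3) = T (n+2) @ (sigma ^^ (n+2)) [B]" using TA[of "n+2"] by (simp add: numeral_3_eq_3)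
  moreover have "(sigma ^^ (n+2)) [B] = T (n+1) @ (sigma ^^ (n+1)) [C]" using TB[of "n+1"] by simp
  moreover have "(sigma ^^ (n+1)) [C] = T n" using TC[of n] by simp
  ultimately show ?thesis by (simp add: tn_def)
qed

lemma tn_0: "tn 0 = 1" by (simp add: tn_def)
lemma tn_1: "tn 1 = 2" by (simp add: tn_def sigma_def)
lemma tn_2: "tn 2 = 4" by (simp add: tn_def sigma_def numeral_2_eq_2)
lemma len_funpow_ge: "length u \<le> length ((sigma ^^ n) u)"
proof (induction n)
  case (Suc n) then show ?case using len_sigma_ge[of "(sigma ^^ n) u"] by simp
qed simp

lemma tn_Suc_gt: "tn n < tn (Suc n)"
proof -
  have "1 \<le> length ((sigma ^^ n) [B])" using len_funpow_ge[of "[B]" n] by simp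
  then have "(sigma ^^ n) [B] \<noteq> []" by auto
  then show ?thesis using TA[of n] by (simp add: tn_def del: funpow.simps)
qed

lemma tn_mono: "a \<le> b \<Longrightarrow> tn a \<le> tn b"
proof (induction b rule: dec_induct)
  case (step n) then show ?case using tn_Suc_gt[of n] by linarith
qed simp

lemma tn_strict: "a < b \<Longrightarrow> tn a < tn b"
  using tn_Suc_gt[of a] tn_mono[of "Suc a" b] by simp

lemma tn_inj: "tn a = tn b \<Longrightarrow> a = b"
  by (metis linorder_neqE_nat less_irrefl tn_strict)

lemma pos_tn: "pos (tn i) = tn (Suc i)"
  unfolding pos_def pref_T by (simp add: tn_def)

lemma PD: assumes i2: "2 \<le> i" and m: "m \<le> tn (Suc i) - tn i"
  shows "pos (tn i + m) = tn (Suc i) + pos m"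
proof -
  obtain k where k: "i = k + 2" using i2 by (metis add.commute le_Suc_ex)
  let ?U = "(sigma ^^ (k+2)) [B]"
  have U: "?U = T (k+1) @ T k" using TB[of "k+1"] TC[of k] by simp
  have T2: "T (k+2) = T (k+1) @ T k @ (sigma ^^ k) [C]"
    using TA[of "k+1"] TB[of k] by simp
  have T3: "T (k+3) = T (k+2) @ ?U" using TA[of "k+2"] by (simp add: numeral_3_eq_3)
  have lenU: "length ?U = tn (Suc i) - tn i" using T3 k by (simp add: tn_def numeral_3_eq_3)
  have eq: "\<And>y. y < length ?U \<Longrightarrow> xw (tn i + y) = xw y"
  proof -
    fix y assume y: "y < length ?U"
    have "xw (tn i + y) = T (k+3) ! (tn i + y)"
      using xw_T[of "tn i + y" "k+3"] T3 y k by (simp add: tn_def)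
    also have "\<dots> = ?U ! y" using T3 k by (simp add: tn_def nth_append)
    also have "\<dots> = T (k+2) ! y"
    proof -
      have T2': "T (k+2) = ?U @ (sigma ^^ k) [C]" using U T2 by (simp del: funpow.simps)
      show ?thesis using y by (subst T2') (simp add: nth_append del: funpow.simps)
    qed
    also have "\<dots> = xw y" using xw_T[of y "k+2"] U T2 y by simp
    finally show "xw (tn i + y) = xw y" .
  qed
  have "map xw [tn i..<tn i + m] = map xw [0..<m]"
    using eq m lenU by (intro nth_equalityI) auto
  then have "map xw [tn i..<tn i + m] = pref m" by (simp add: pref_def)
  then show ?thesis using pos_add[of "tn i" m] pos_tn[of i] by (simp add: pos_def)
qed

lemma T4: "T 4 = [A,B,A,C,A,B,A,A,B,A,C,A,B]"
proof -
  have "T 4 = sigma (sigma (sigma (sigma [A])))" by (simp add: eval_nat_numeral)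
  then show ?thesis by (simp add: sigma_def)
qed

lemma xw_T4: "i < 13 \<Longrightarrow> xw i = [A,B,A,C,A,B,A,A,B,A,C,A,B] ! i"
  using xw_T[of i 4] T4 by simp

lemma xw_small: "xw 0 = A" "xw 1 = B" "xw 2 = A" "xw 3 = C"
  using xw_T4[of 0] xw_T4[of 1] xw_T4[of 2] xw_T4[of 3] by simp_all

lemma pref_small: "k \<le> 13 \<Longrightarrow> pref k = take k [A,B,A,C,A,B,A,A,B,A,C,A,B]"
  using pref_take[of k 4] T4 by simp

lemma pos_small: "pos 1 = 2" "pos 3 = 6" "pos 7 = 13"
  by (simp_all add: pos_def pref_small sigma_def)

lemma trib_induct:
  assumes "P 0" "P 1" "P 2" "\<And>n. P n \<Longrightarrow> P (Suc n) \<Longrightarrow> P (Suc (Suc n)) \<Longrightarrow> P (n + 3)"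
  shows "P n"
proof (induction n rule: less_induct)
  case (less n)
  show ?case
  proof (cases "n \<le> 2")
    case True then have "n = 0 \<or> n = 1 \<or> n = 2" by auto
    then show ?thesis using assms by auto
  next
    case False
    then obtain m where m: "n = m + 3" by (metis add.commute le_Suc_ex not_le numeral_3_eq_3 Suc_leI numeral_2_eq_2)
    show ?thesis using assms(4)[of m] less.IH m by simp
  qed
qed

lemma tn_vals: "tn 3 = 7" "tn 4 = 13" "tn 5 = 24" "tn 6 = 44" "tn 7 = 81"
proof -
  have r: "\<And>n. tn (Suc (Suc (Suc n))) = tn (Suc (Suc n)) + tn (Suc n) + tn n"
    using tn_rec by (simp add: eval_nat_numeral)
  have t0: "tn 0 = 1" and t1: "tn (Suc 0) = 2" and t2: "tn (Suc (Suc 0)) = 4"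
    using tn_0 tn_1 tn_2 by (simp_all add: eval_nat_numeral)
  show "tn 3 = 7" "tn 4 = 13" "tn 5 = 24" "tn 6 = 44" "tn 7 = 81"
    using r t0 t1 t2 by (simp_all add: eval_nat_numeral)
qed

lemma knum_vals: "knum 5 = 3" "knum 6 = 5" "knum 7 = 9" "knum 8 = 16"
  by (simp_all add: eval_nat_numeral)

lemma knum_rec_at: "a = n + 3 \<Longrightarrow> b = n + 2 \<Longrightarrow> c = n + 1 \<Longrightarrow> knum a = knum b + knum c + knum n - 1"
  using knum.simps(4)[of n] by (simp add: eval_nat_numeral)

lemma tn_rec_at: "a = n + 3 \<Longrightarrow> b = n + 2 \<Longrightarrow> c = n + 1 \<Longrightarrow> tn a = tn b + tn c + tn n"
  using tn_rec[of n] by simp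

lemma knum_closed_aux: "\<forall>a b. a = m + 5 \<longrightarrow> b = m + 2 \<longrightarrow> 2 * knum a = int (tn b) + int (tn m) + 1"
proof (induction m rule: trib_induct)
  case 1 then show ?case using knum_vals tn_vals tn_0 tn_2 by (simp add: eval_nat_numeral)
next
  case 2 then show ?case using knum_vals tn_vals tn_1 by (simp add: eval_nat_numeral)
next
  case 3 then show ?case using knum_vals tn_vals tn_2 by (simp add: eval_nat_numeral)
next
  case (4 n)
  show ?case
  proof (intro allI impI)
    fix a b assume a: "a = n + 3 + 5" and b: "b = n + 3 + 2"
    have h0: "2 * knum (n+5) = int (tn (n+2)) + int (tn n) + 1" using 4(1) by blast
    have h1: "2 * knum (n+6) = int (tn (n+3)) + int (tn (Suc n)) + 1" using spec[OF spec[OF 4(2), of "n+6"], of "n+3"] by simp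
    have h2: "2 * knum (n+7) = int (tn (n+4)) + int (tn (Suc (Suc n))) + 1" using spec[OF spec[OF 4(3), of "n+7"], of "n+4"] by simp
    have k: "knum a = knum (n+7) + knum (n+6) + knum (n+5) - 1" by (rule knum_rec_at) (simp_all add: a)
    have t: "tn b = tn (n+4) + tn (n+3) + tn (Suc (Suc n))" by (rule tn_rec_at) (simp_all add: b)
    have t2: "n + 2 = Suc (Suc n)" by simp
    have h0': "2 * knum (n+5) = int (tn (Suc (Suc n))) + int (tn n) + 1" using h0 t2 by simp
    have t3: "tn (n + 3) = tn (Suc (Suc n)) + tn (Suc n) + tn n" by (rule tn_rec_at) simp_all
    show "2 * knum a = int (tn b) + int (tn (n + 3)) + 1" using h0' h1 h2 k t t3 by linarith
  qed
qed

lemma knum_closed: "2 * knum (m + 5) = int (tn (m + 2)) + int (tn m) + 1"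
  using knum_closed_aux by blast

definition kn :: "nat \<Rightarrow> nat" where "kn m = nat (knum m)"

lemma kn_int: "int (kn (m + 5)) = knum (m + 5)"
proof -
  have "tn (m+2) \<ge> 1" "tn m \<ge> 1" using tn_pos by auto
  then have "knum (m + 5) \<ge> 0" using knum_closed[of m] by linarith
  then show ?thesis by (simp add: kn_def)
qed

lemma kn_closed: "2 * kn (m + 5) = tn (m + 2) + tn m + 1"
  using knum_closed[of m] kn_int[of m] by linarith

lemma kn_closed_at: "a = m + 5 \<Longrightarrow> b = m + 2 \<Longrightarrow> 2 * kn a = tn b + tn m + 1"
  using kn_closed by simp

lemma kn_rel: "kn (n + 8) = kn (n + 5) + tn (n + 4)"
proof -
  have a: "2 * kn (n + 8) = tn (n + 5) + tn (n + 3) + 1" by (rule kn_closed_at) simp_all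
  have b: "2 * kn (n + 5) = tn (n + 2) + tn n + 1" by (rule kn_closed)
  have t1: "tn (n+5) = tn (n+4) + tn (n+3) + tn (n+2)" by (rule tn_rec_at) simp_all
  have t2: "tn (n + 3) = tn (n + 2) + tn (n + 1) + tn n" by (rule tn_rec)
  have t3: "tn (n+4) = tn (n+3) + tn (n+2) + tn (n+1)" by (rule tn_rec_at) simp_all
  show ?thesis using a b t1 t2 t3 by linarith
qed

lemma kn_le: "kn (m + 5) \<le> tn (m + 2)"
  using kn_closed[of m] tn_mono[of m "m+2"] by linarith

lemma kn_ge: "3 \<le> kn (m + 5)"
  using kn_closed[of m] tn_mono[of 2 "m+2"] tn_2 tn_pos[of m] by linarith

lemma kn_vals: "kn 5 = 3" "kn 6 = 5" "kn 7 = 9" "kn 8 = 16"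
  by (simp_all add: kn_def knum_vals)

lemma PK_aux: "\<forall>a b. a = m + 5 \<longrightarrow> b = m + 6 \<longrightarrow> pos (kn a - 2) = kn b - 3"
proof (induction m rule: trib_induct)
  case 1 then show ?case using kn_vals pos_small by simp
next
  case 2 then show ?case using kn_vals pos_small by simp
next
  case 3 then show ?case using kn_vals pos_small by simp
next
  case (4 n)
  show ?case
  proof (intro allI impI)
    fix a b assume a: "a = n + 3 + 5" and b: "b = n + 3 + 6"
    have IH: "pos (kn (n + 5) - 2) = kn (n + 6) - 3" using 4(1) by blast
    have r1: "kn a = kn (n + 5) + tn (n + 4)" using kn_rel[of n] a by (simp add: ac_simps)
    have r2: "kn b = kn (n + 6) + tn (n + 5)" using kn_rel[of "n+1"] b by (simp add: ac_simps)
    have t1: "tn (n+5) = tn (n+4) + tn (n+3) + tn (n+2)" by (rule tn_rec_at) simp_all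
    have kl: "kn (n + 5) \<le> tn (n + 2)" by (rule kn_le)
    have k3: "3 \<le> kn (n + 5)" by (rule kn_ge)
    have k4: "3 \<le> kn (n + 6)" using kn_ge[of "n+1"] by (simp add: ac_simps)
    have "Suc (n + 4) = n + 5" by simp
    then have t5: "tn (Suc (n + 4)) = tn (n + 5)" by (rule arg_cong)
    have le: "kn (n + 5) - 2 \<le> tn (Suc (n + 4)) - tn (n + 4)" using kl t1 t5 by linarith
    have e1: "kn a - 2 = tn (n + 4) + (kn (n + 5) - 2)" using r1 k3 by simp
    have "pos (tn (n + 4) + (kn (n + 5) - 2)) = tn (Suc (n + 4)) + pos (kn (n + 5) - 2)"
      by (rule PD) (use le in simp_all)
    then show "pos (kn a - 2) = kn b - 3" using e1 IH r2 k4 t5 by simp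
  qed
qed

lemma PK: "pos (kn (m + 5) - 2) = kn (m + 6) - 3"
  using PK_aux by blast

lemma I_closed: "fs j 3 = tn (j + 3) - tn j"
proof (induction j)
  case 0 then show ?case using pos_small tn_vals tn_0 by (simp add: fs_0)
next
  case (Suc j)
  have t1: "tn (j + 3) = tn (j + 2) + tn (j + 1) + tn j" by (rule tn_rec)
  have t2: "tn (j + 4) = tn (j + 3) + tn (j + 2) + tn (j + 1)" by (rule tn_rec_at) simp_all
  have "Suc (j + 2) = j + 3" by simp
  then have t3: "tn (Suc (j + 2)) = tn (j + 3)" by (rule arg_cong)
  have "j + 1 + 1 = j + 2" by simp
  then have t4: "tn (Suc (j + 1)) = tn (j + 2)" by simp
  have pt: "pos (tn (j + 1)) = tn (j + 2)" using pos_tn[of "j+1"] t4 by simp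
  have "pos (tn (j + 2) + tn (j + 1)) = tn (Suc (j + 2)) + pos (tn (j + 1))"
    by (rule PD) (use t1 t3 in simp_all)
  then have "pos (tn (j + 2) + tn (j + 1)) = tn (j + 3) + tn (j + 2)" using t3 pt by simp
  moreover have "fs (Suc j) 3 = pos (tn (j + 2) + tn (j + 1))" using Suc t1 by (simp add: fs_Suc)
  moreover have "tn (Suc j + 3) - tn (Suc j) = tn (j + 3) + tn (j + 2)"
  proof -
    have "Suc j + 3 = j + 4" by simp
    then have "tn (Suc j + 3) = tn (j + 4)" by (rule arg_cong)
    then show ?thesis using t2 by simp
  qed
  ultimately show ?case by simp
qed

lemma E_closed: "fs j 3 + length (W j) = tn (j + 3) + kn (j + 5) - 2"
proof (induction j)
  case 0 then show ?case using pos_small tn_vals kn_vals by (simp add: fs_0)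
next
  case (Suc j)
  let ?u = "fs j 3"
  have c: "xw 3 = C" using xw_small by simp
  have L: "length (W (Suc j)) = pos (?u + length (W j)) - pos ?u + 1" by (rule fam_len[OF c])
  have m: "pos ?u \<le> pos (?u + length (W j))" by simp
  have k3: "3 \<le> kn (j + 5)" by (rule kn_ge)
  have kl: "kn (j + 5) \<le> tn (j + 2)" by (rule kn_le)
  have t2: "tn (j + 4) = tn (j + 3) + tn (j + 2) + tn (j + 1)" by (rule tn_rec_at) simp_all
  have "Suc (j + 3) = j + 4" by simp
  then have t3: "tn (Suc (j + 3)) = tn (j + 4)" by (rule arg_cong)
  have "pos (tn (j + 3) + (kn (j + 5) - 2)) = tn (Suc (j + 3)) + pos (kn (j + 5) - 2)"
    by (rule PD) (use t2 t3 kl in simp_all)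
  then have P: "pos (tn (j + 3) + (kn (j + 5) - 2)) = tn (j + 4) + kn (j + 6) - 3"
    using PK[of j] t3 kn_ge[of "j+1"] by (simp add: ac_simps)
  have "fs (Suc j) 3 + length (W (Suc j)) = pos (?u + length (W j)) + 1"
    using L m by (simp add: fs_Suc)
  also have "?u + length (W j) = tn (j + 3) + (kn (j + 5) - 2)" using Suc k3 by simp
  finally have "fs (Suc j) 3 + length (W (Suc j)) = tn (j + 4) + kn (j + 6) - 2"
    using P kn_ge[of "j+1"] by (simp add: ac_simps)
  moreover have "Suc j + 3 = j + 4" by simp
  then have e1: "tn (Suc j + 3) = tn (j + 4)" by (rule arg_cong)
  moreover have "Suc j + 5 = j + 6" by simp
  then have e2: "kn (Suc j + 5) = kn (j + 6)" by (rule arg_cong)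
  ultimately show ?case by linarith
qed

lemma Wlen: "length (W j) = tn j + kn (j + 5) - 2"
  using E_closed[of j] I_closed[of j] tn_mono[of j "j+3"] kn_ge[of j] by linarith

lemma Q1_aux: "\<forall>a b. a = m + 5 \<longrightarrow> b = m + 3 \<longrightarrow> 3 * tn b + 3 \<le> tn a"
proof (induction m rule: trib_induct)
  case 1 then show ?case using tn_vals by (simp add: eval_nat_numeral)
next
  case 2 then show ?case using tn_vals by (simp add: eval_nat_numeral)
next
  case 3 then show ?case using tn_vals by (simp add: eval_nat_numeral)
next
  case (4 n)
  show ?case
  proof (intro allI impI)
    fix a b assume a: "a = n + 3 + 5" and b: "b = n + 3 + 3"
    have h0: "3 * tn (n+3) + 3 \<le> tn (n+5)" using 4(1) by blast
    have h1: "3 * tn (n+4) + 3 \<le> tn (n+6)" using spec[OF spec[OF 4(2), of "n+6"], of "n+4"] by simp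
    have h2: "3 * tn (n+5) + 3 \<le> tn (n+7)" using spec[OF spec[OF 4(3), of "n+7"], of "n+5"] by simp
    have ta: "tn a = tn (n+7) + tn (n+6) + tn (n+5)" by (rule tn_rec_at) (simp_all add: a)
    have tb: "tn b = tn (n+5) + tn (n+4) + tn (n+3)" by (rule tn_rec_at) (simp_all add: b)
    show "3 * tn b + 3 \<le> tn a" using h0 h1 h2 ta tb by linarith
  qed
qed

lemma Q1: "3 * tn (m + 3) + 3 \<le> tn (m + 5)" using Q1_aux by blast

lemma Q2_aux: "\<forall>a. a = m + 2 \<longrightarrow> tn a \<le> 4 * tn m"
proof (induction m rule: trib_induct)
  case 1 then show ?case using tn_vals tn_0 tn_2 by (simp add: eval_nat_numeral)
next
  case 2 then show ?case using tn_vals tn_1 by (simp add: eval_nat_numeral)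
next
  case 3 then show ?case using tn_vals tn_2 by (simp add: eval_nat_numeral)
next
  case (4 n)
  show ?case
  proof (intro allI impI)
    fix a assume a: "a = n + 3 + 2"
    have h0: "tn (n+2) \<le> 4 * tn n" using 4(1) by blast
    have h1: "tn (n+3) \<le> 4 * tn (Suc n)" using spec[OF 4(2), of "n+3"] by simp
    have h2: "tn (n+4) \<le> 4 * tn (Suc (Suc n))" using spec[OF 4(3), of "n+4"] by simp
    have ta: "tn a = tn (n+4) + tn (n+3) + tn (n+2)" by (rule tn_rec_at) (simp_all add: a)
    have tb: "tn (n+3) = tn (Suc (Suc n)) + tn (Suc n) + tn n" by (rule tn_rec_at) simp_all
    have e: "n + 2 = Suc (Suc n)" by simp
    show "tn a \<le> 4 * tn (n + 3)" using h0 h1 h2 ta tb e by simp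
  qed
qed

lemma Q2: "tn (m + 2) \<le> 4 * tn m" using Q2_aux by blast

lemma W_ge3: assumes "3 \<le> j" shows "3 * tn j \<le> length (W j)"
proof -
  obtain m where m: "j = m + 3" using assms by (metis add.commute le_Suc_ex)
  have "3 * tn (m + 3) + 3 \<le> tn (m + 5)" by (rule Q1)
  moreover have "tn (m + 5) = tn (j + 2)" using m by (simp add: ac_simps)
  ultimately have "3 * tn j + 3 \<le> tn (j + 2)" using m by simp
  then show ?thesis using kn_closed[of j] Wlen[of j] by linarith
qed

lemma W_lt3: assumes "j \<le> 2" shows "length (W j) < 3 * tn j"
proof -
  have "j = 0 \<or> j = 1 \<or> j = 2" using assms by auto
  then show ?thesis using Wlen kn_vals tn_0 tn_1 tn_2 by auto
qed

lemma W_lt4: "length (W j) < 4 * tn j"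
  using Wlen[of j] kn_closed[of j] Q2[of j] tn_pos[of j] by linarith

definition Aj :: "nat \<Rightarrow> nat" where "Aj j = tn (j + 3) + 2 * tn j"
definition Ej :: "nat \<Rightarrow> nat" where "Ej j = tn (j + 3) + kn (j + 5) - 2"

lemma Aj_eq: "fs j 3 + 3 * tn j = Aj j"
  using I_closed[of j] tn_mono[of j "j+3"] by (simp add: Aj_def)

lemma Ej_eq: "fs j 3 + length (W j) = Ej j"
  using E_closed by (simp add: Ej_def)

lemma Ej_lt: "Ej j < Aj (Suc j)"
proof -
  have t2: "tn (j + 4) = tn (j + 3) + tn (j + 2) + tn (j + 1)" by (rule tn_rec_at) simp_all
  have "Suc j + 3 = j + 4" by simp
  then have "tn (Suc j + 3) = tn (j + 4)" by (rule arg_cong)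
  then show ?thesis using t2 kn_le[of j] tn_pos[of "Suc j"] by (simp add: Aj_def Ej_def)
qed

lemma Aj_mono: "a \<le> b \<Longrightarrow> Aj a \<le> Aj b"
  using tn_mono[of a b] tn_mono[of "a+3" "b+3"] by (simp add: Aj_def)

lemma Aj_le_Ej: "3 \<le> j \<Longrightarrow> Aj j \<le> Ej j"
  using W_ge3 Aj_eq Ej_eq by (metis add_le_cancel_left)

lemma Aj_3: "Aj 3 = 58" by (simp add: Aj_def tn_vals)

lemma per_sub: "per i p d \<Longrightarrow> a + b \<le> d \<Longrightarrow> per (i + a) p b"
  unfolding per_def by (metis add.assoc add_less_cancel_left less_le_trans)

lemma ext_left: assumes "per z p d" shows "\<exists>i\<le>z. leftmax i p \<and> per i p (z + d - i)"
proof -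
  define i0 where "i0 = (LEAST i. i \<le> z \<and> per i p (z + d - i))"
  have ex: "\<exists>i. i \<le> z \<and> per i p (z + d - i)" using assms by (rule_tac x=z in exI) simp
  have i0: "i0 \<le> z \<and> per i0 p (z + d - i0)" unfolding i0_def using ex by (rule LeastI_ex)
  have lm: "leftmax i0 p"
  proof (rule ccontr)
    assume "\<not> leftmax i0 p"
    then have n0: "i0 \<noteq> 0" and e: "xw (i0 - 1) = xw (i0 - 1 + p)" by (auto simp: leftmax_def)
    have "per (i0 - 1) p (z + d - (i0 - 1))"
      unfolding per_def
    proof (intro allI impI)
      fix y assume y: "y < z + d - (i0 - 1)"
      show "xw (i0 - 1 + y) = xw (i0 - 1 + y + p)"
      proof (cases y)
        case 0 then show ?thesis using e by simp
      next
        case (Suc y')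
        then have "y' < z + d - i0" using y n0 by simp
        then have "xw (i0 + y') = xw (i0 + y' + p)" using i0 by (simp add: per_def)
        then show ?thesis using Suc n0 by simp
      qed
    qed
    moreover have "i0 - 1 \<le> z" using i0 by linarith
    ultimately have "i0 - 1 \<le> z \<and> per (i0 - 1) p (z + d - (i0 - 1))" by blast
    then have "i0 \<le> i0 - 1" unfolding i0_def by (rule Least_le)
    then show False using n0 by simp
  qed
  then show ?thesis using i0 by blast
qed

lemma fs_mono: "q \<le> q' \<Longrightarrow> fs j q \<le> fs j q'"
  by (induction j) (simp_all add: fs_0 fs_Suc)

lemma content_nth: assumes "xw q = C" "k < length (W j)" shows "xw (fs j q + k) = W j ! k"
proof -
  have "map xw [fs j q..<fs j q + length (W j)] ! k = W j ! k" using content[OF assms(1)] by simp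
  then show ?thesis using assms(2) by simp
qed

lemma C_ge3: assumes "xw q = C" shows "3 \<le> q"
proof (rule ccontr)
  assume "\<not> 3 \<le> q" then have "q = 0 \<or> q = 1 \<or> q = 2" by auto
  then show False using xw_small assms by auto
qed

lemma cube_family:
  assumes p1: "1 \<le> p" and pr: "per z p (2 * p)"
  shows "\<exists>j r. 3 \<le> j \<and> p = tn j \<and> r + 3 * p \<le> length (W j) \<and> fs j 3 + r \<le> z \<and>
           (\<forall>y<3 * p. xw (z + y) = xw (fs j 3 + r + y))"
proof -
  obtain i where i: "i \<le> z" "leftmax i p" "per i p (z + 2 * p - i)" using ext_left[OF pr] by blast
  note cl = claim[OF p1 i(2) i(3)]
  have "\<not> (z + 2 * p - i + 2 \<le> 2 * p)" using i(1) by simp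
  then obtain j q where J: "xw q = C" "i = fs j q" "p = tn j" "z + 2 * p - i + p \<le> length (W j)"
    using cl by blast
  define r where "r = z - i"
  have r3: "r + 3 * p \<le> length (W j)" using J(4) i(1) r_def by simp
  have j3: "3 \<le> j"
  proof (rule ccontr)
    assume "\<not> 3 \<le> j" then have "length (W j) < 3 * tn j" using W_lt3 by simp
    then show False using r3 J(3) by simp
  qed
  have q3: "fs j 3 \<le> fs j q" using C_ge3[OF J(1)] by (rule fs_mono)
  have c3: "xw 3 = C" using xw_small by simp
  have eq: "\<forall>y<3 * p. xw (z + y) = xw (fs j 3 + r + y)"
  proof (intro allI impI)
    fix y assume y: "y < 3 * p"
    have k: "r + y < length (W j)" using y r3 by simp
    have "xw (z + y) = xw (fs j q + (r + y))" using J(2) i(1) r_def by simp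
    also have "\<dots> = W j ! (r + y)" using content_nth[OF J(1) k] .
    also have "\<dots> = xw (fs j 3 + (r + y))" using content_nth[OF c3 k] by simp
    finally show "xw (z + y) = xw (fs j 3 + r + y)" by (simp add: add.assoc)
  qed
  have "fs j 3 + r \<le> z" using q3 J(2) i(1) r_def by simp
  then show ?thesis using j3 J(3) r3 eq by blast
qed

lemma uniq_r_lt:
  assumes r: "r + 3 * tn j \<le> length (W j)" and r': "r' + 3 * tn j \<le> length (W j)"
    and lt: "r < r'" and eq: "\<forall>y<3 * tn j. xw (fs j 3 + r + y) = xw (fs j 3 + r' + y)"
  shows False
proof -
  define dl where "dl = r' - r"
  have dl1: "1 \<le> dl" using lt dl_def by simp
  have "length (W j) < 4 * tn j" by (rule W_lt4)
  then have dlt: "dl < tn j" using r' dl_def by simp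
  have pr: "per (fs j 3 + r) dl (3 * tn j)"
    unfolding per_def
  proof (intro allI impI)
    fix y assume y: "y < 3 * tn j"
    have e: "fs j 3 + r + y + dl = fs j 3 + r' + y" using dl_def lt by simp
    show "xw (fs j 3 + r + y) = xw (fs j 3 + r + y + dl)" unfolding e using eq y by simp
  qed
  obtain i where i: "i \<le> fs j 3 + r" "leftmax i dl" "per i dl (fs j 3 + r + 3 * tn j - i)"
    using ext_left[OF pr] by blast
  let ?d = "fs j 3 + r + 3 * tn j - i"
  have dge: "3 * tn j \<le> ?d" using i(1) by simp
  from claim[OF dl1 i(2) i(3)] show False
  proof
    assume "?d + 2 \<le> 2 * dl" then show False using dge dlt by simp
  next
    assume "\<exists>j' q. xw q = C \<and> i = fs j' q \<and> dl = tn j' \<and> ?d + dl \<le> length (W j')"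
    then obtain j' where "dl = tn j'" "?d + dl \<le> length (W j')" by blast
    moreover have "length (W j') < 4 * tn j'" by (rule W_lt4)
    ultimately show False using dge dlt by simp
  qed
qed

lemma uniq_r:
  assumes "r + 3 * tn j \<le> length (W j)" "r' + 3 * tn j \<le> length (W j)"
    and eq: "\<forall>y<3 * tn j. xw (fs j 3 + r + y) = xw (fs j 3 + r' + y)"
  shows "r = r'"
proof (rule ccontr)
  assume "r \<noteq> r'"
  then consider "r < r'" | "r' < r" by linarith
  then show False
  proof cases
    case 1 then show False using uniq_r_lt assms by blast
  next
    case 2 then show False using uniq_r_lt[of r' j r] assms by simp
  qed
qed

definition Good :: "nat \<Rightarrow> nat \<Rightarrow> bool" where
  "Good n p \<longleftrightarrow> 1 \<le> p \<and> 3 * p \<le> n \<and> per (n - 3 * p) p (2 * p) \<and>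
     \<not> (\<exists>z. z + 3 * p \<le> n - 1 \<and> (\<forall>y<3 * p. xw (z + y) = xw (n - 3 * p + y)))"

lemma Good_iff: "Good n p \<longleftrightarrow> (\<exists>j\<ge>3. p = tn j \<and> Aj j \<le> n \<and> n \<le> Ej j)"
proof
  assume G: "Good n p"
  let ?z = "n - 3 * p"
  have p1: "1 \<le> p" and pn: "3 * p \<le> n" and pr: "per ?z p (2 * p)" using G by (auto simp: Good_def)
  obtain j r where J: "3 \<le> j" "p = tn j" "r + 3 * p \<le> length (W j)" "fs j 3 + r \<le> ?z"
      "\<forall>y<3 * p. xw (?z + y) = xw (fs j 3 + r + y)"
    using cube_family[OF p1 pr] by blast
  have "\<not> (fs j 3 + r + 3 * p \<le> n - 1)"
  proof
    assume h: "fs j 3 + r + 3 * p \<le> n - 1"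
    have "\<forall>y<3 * p. xw (fs j 3 + r + y) = xw (?z + y)" using J(5) by simp
    then show False using G h by (auto simp: Good_def)
  qed
  then have nz: "n = fs j 3 + r + 3 * p" using J(4) pn by linarith
  have "Aj j \<le> n" using nz Aj_eq[of j] J(2) by simp
  moreover have "n \<le> Ej j" using nz J(3) Ej_eq[of j] by simp
  ultimately show "\<exists>j\<ge>3. p = tn j \<and> Aj j \<le> n \<and> n \<le> Ej j" using J(1,2) by blast
next
  assume "\<exists>j\<ge>3. p = tn j \<and> Aj j \<le> n \<and> n \<le> Ej j"
  then obtain j where J: "3 \<le> j" "p = tn j" "Aj j \<le> n" "n \<le> Ej j" by blast
  let ?I = "fs j 3" and ?z = "n - 3 * p"
  have c3: "xw 3 = C" using xw_small by simp
  have p1: "1 \<le> p" using J(2) tn_pos by simp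
  have zI: "?I + 3 * p \<le> n" using J(3) Aj_eq[of j] J(2) by simp
  define r where "r = ?z - ?I"
  have zr: "?z = ?I + r" using zI r_def by simp
  have rl: "r + 3 * p \<le> length (W j)" using J(4) Ej_eq[of j] zr zI by simp
  have fp: "per ?I p (length (W j) - p)" using fam_per[OF c3, of j] J(2) by simp
  have pr: "per ?z p (2 * p)" using per_sub[OF fp, of r "2 * p"] rl zr by simp
  have noearly: "\<not> (\<exists>z'. z' + 3 * p \<le> n - 1 \<and> (\<forall>y<3 * p. xw (z' + y) = xw (?z + y)))"
  proof
    assume "\<exists>z'. z' + 3 * p \<le> n - 1 \<and> (\<forall>y<3 * p. xw (z' + y) = xw (?z + y))"
    then obtain z' where z': "z' + 3 * p \<le> n - 1" "\<forall>y<3 * p. xw (z' + y) = xw (?z + y)" by blast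
    have pr': "per z' p (2 * p)" unfolding per_def
    proof (intro allI impI)
      fix y assume y: "y < 2 * p"
      have "xw (z' + y) = xw (?z + y)" using z'(2) y by simp
      also have "\<dots> = xw (?z + y + p)" using pr y by (simp add: per_def)
      also have "\<dots> = xw (z' + (y + p))" using z'(2) y by (simp add: add.assoc)
      finally show "xw (z' + y) = xw (z' + y + p)" by (simp add: add.assoc)
    qed
    obtain j' r' where J': "3 \<le> j'" "p = tn j'" "r' + 3 * p \<le> length (W j')" "fs j' 3 + r' \<le> z'"
        "\<forall>y<3 * p. xw (z' + y) = xw (fs j' 3 + r' + y)"
      using cube_family[OF p1 pr'] by blast
    have jj: "j' = j" using J(2) J'(2) tn_inj by simp
    have "\<forall>y<3 * tn j. xw (?I + r + y) = xw (?I + r' + y)"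
      using z'(2) J'(5) zr jj J(2) by (metis add.assoc)
    then have "r = r'" using uniq_r[of r j r'] rl J'(3) jj J(2) by simp
    then have "fs j 3 + r \<le> z'" using J'(4) jj by simp
    then show False using zr z'(1) zI p1 by arith
  qed
  show "Good n p" unfolding Good_def using p1 zI pr noearly by simp
qed

lemma length_pref[simp]: "length (pref n) = n" by (simp add: pref_def)

lemma trib_prefix_pref: "trib_prefix n = pref n"
proof -
  have "[1..<n+1] = map Suc [0..<n]" by (simp add: map_Suc_upt del: upt_Suc)
  then show ?thesis by (simp add: trib_prefix_def pref_def xw_def del: upt_Suc)
qed

lemma suffix_pref: "suffix v (pref n) \<longleftrightarrow> length v \<le> n \<and> v = map xw [n - length v..<n]"
proof
  assume "suffix v (pref n)"
  then obtain zs where zs: "pref n = zs @ v" by (auto simp: suffix_def)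
  have ll: "length (pref n) = length zs + length v" using zs by simp
  then have l: "length v \<le> n" by simp
  have "v = drop (length zs) (pref n)" using zs by simp
  moreover have "length zs = n - length v" using ll by simp
  ultimately have "v = drop (n - length v) (map xw [0..<n])" by (simp add: pref_def)
  then have "v = map xw [n - length v..<n]" by (simp add: drop_map)
  then show "length v \<le> n \<and> v = map xw [n - length v..<n]" using l by simp
next
  assume h: "length v \<le> n \<and> v = map xw [n - length v..<n]"
  then have "pref n = pref (n - length v) @ v" using pref_add[of "n - length v" "length v"] by simp
  then show "suffix v (pref n)" by (auto simp: suffix_def)
qed

lemma sublist_pref: "sublist v (pref m) \<longleftrightarrow> (\<exists>z. z + length v \<le> m \<and> v = map xw [z..<z + length v])"
proof
  assume "sublist v (pref m)"
  then obtain ps ss where e: "pref m = ps @ v @ ss" by (auto simp: sublist_def)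
  have len: "length ps + length v + length ss = m" using arg_cong[OF e, of length] by (simp add: pref_def)
  have "v = take (length v) (drop (length ps) (pref m))" using e by simp
  also have "\<dots> = map xw [length ps..<length ps + length v]"
    using len by (simp add: pref_def drop_map take_map take_upt)
  finally show "\<exists>z. z + length v \<le> m \<and> v = map xw [z..<z + length v]" using len
    by (rule_tac x="length ps" in exI) simp
next
  assume "\<exists>z. z + length v \<le> m \<and> v = map xw [z..<z + length v]"
  then obtain z where z: "z + length v \<le> m" "v = map xw [z..<z + length v]" by blast
  have "pref m = pref (z + length v) @ map xw [z + length v..<z + length v + (m - (z + length v))]"
    using pref_add[of "z + length v" "m - (z + length v)"] z(1) by simp
  also have "pref (z + length v) = pref z @ v" using pref_add[of z "length v"] z(2) by simp
  finally have "pref m = pref z @ v @ map xw [z + length v..<m]" using z(1) by simp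
  then show "sublist v (pref m)" unfolding sublist_def by blast
qed

lemma cube_list:
  "w @ w @ w = map xw [z..<z + 3 * length w] \<longleftrightarrow>
    w = map xw [z..<z + length w] \<and> per z (length w) (2 * length w)"
  (is "?L \<longleftrightarrow> ?R")
proof
  assume L: ?L
  let ?p = "length w"
  have nth: "\<And>y. y < 3 * ?p \<Longrightarrow> (w @ w @ w) ! y = xw (z + y)"
    using L by (metis length_map length_upt add_diff_cancel_left' nth_map_upt)
  have w1: "\<And>y. y < ?p \<Longrightarrow> w ! y = xw (z + y)"
  proof -
    fix y assume y: "y < ?p"
    have "(w @ w @ w) ! y = w ! y" using y by (simp add: nth_append)
    then show "w ! y = xw (z + y)" using nth[of y] y by simp
  qed
  have w2: "\<And>y. y < ?p \<Longrightarrow> w ! y = xw (z + y + ?p)"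
  proof -
    fix y assume y: "y < ?p"
    have "(w @ w @ w) ! (y + ?p) = w ! y" using y by (simp add: nth_append)
    then show "w ! y = xw (z + y + ?p)" using nth[of "y + ?p"] y by (simp add: add.assoc)
  qed
  have w3: "\<And>y. y < ?p \<Longrightarrow> w ! y = xw (z + y + 2 * ?p)"
  proof -
    fix y assume y: "y < ?p"
    have "(w @ w @ w) ! (y + 2 * ?p) = w ! y" using y by (simp add: nth_append)
    then show "w ! y = xw (z + y + 2 * ?p)" using nth[of "y + 2 * ?p"] y by (simp add: add.assoc)
  qed
  have "w = map xw [z..<z + ?p]" by (rule nth_equalityI) (simp_all add: w1)
  moreover have "per z ?p (2 * ?p)" unfolding per_def
  proof (intro allI impI)
    fix y assume y: "y < 2 * ?p"
    show "xw (z + y) = xw (z + y + ?p)"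
    proof (cases "y < ?p")
      case True then show ?thesis using w1 w2 by metis
    next
      case False
      then obtain y' where y': "y = y' + ?p" "y' < ?p" using y by (metis add.commute le_Suc_ex not_less add_less_cancel_left mult_2)
      then show ?thesis using w2[of y'] w3[of y'] by (simp add: add.assoc mult_2)
    qed
  qed
  ultimately show ?R by simp
next
  assume R: ?R
  let ?p = "length w"
  have w1: "\<And>y. y < ?p \<Longrightarrow> w ! y = xw (z + y)" using R by (metis nth_map_upt add_diff_cancel_left')
  have pr: "\<And>y. y < 2 * ?p \<Longrightarrow> xw (z + y) = xw (z + y + ?p)" using R by (simp add: per_def)
  show ?L
  proof (rule nth_equalityI)
    show "length (w @ w @ w) = length (map xw [z..<z + 3 * ?p])" by simp
  next
    fix y assume y: "y < length (w @ w @ w)"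
    show "(w @ w @ w) ! y = map xw [z..<z + 3 * ?p] ! y"
    proof -
      have r: "map xw [z..<z + 3 * ?p] ! y = xw (z + y)" using y by simp
      consider "y < ?p" | "?p \<le> y \<and> y < 2 * ?p" | "2 * ?p \<le> y" by linarith
      then show ?thesis
      proof cases
        case 1 then show ?thesis using r w1 by (simp add: nth_append)
      next
        case 2
        have yy: "y - ?p < ?p" using 2 by linarith
        then have "(w @ w @ w) ! y = w ! (y - ?p)" using 2 by (simp add: nth_append)
        also have "\<dots> = xw (z + (y - ?p))" using w1[OF yy] .
        also have "\<dots> = xw (z + (y - ?p) + ?p)" by (rule pr) (use 2 in linarith)
        finally show ?thesis using r 2 by simp
      next
        case 3
        have yl: "y < 3 * ?p" using y by simp
        have a: "\<not> y < ?p" "\<not> (y - ?p < ?p)" "y - ?p - ?p = y - 2 * ?p" using 3 by linarith+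
        have "(w @ w @ w) ! y = w ! (y - 2 * ?p)" using a by (simp add: nth_append)
        also have "\<dots> = xw (z + (y - 2 * ?p))" by (rule w1) (use 3 yl in linarith)
        also have "\<dots> = xw (z + (y - 2 * ?p) + ?p)" by (rule pr) (use 3 yl in linarith)
        also have "\<dots> = xw (z + (y - 2 * ?p + ?p))" by (simp add: add.assoc)
        also have "\<dots> = xw (z + (y - 2 * ?p + ?p) + ?p)" by (rule pr) (use 3 yl in linarith)
        finally show ?thesis using r 3 by (simp add: algebra_simps)
      qed
    qed
  qed
qed

lemma S_eq: assumes n1: "1 \<le> n"
  shows "{w. w \<noteq> [] \<and> suffix (w @ w @ w) (trib_prefix n) \<and> \<not> sublist (w @ w @ w) (trib_prefix (n - 1))}
       = (\<lambda>p. map xw [n - 3 * p..<n - 3 * p + p]) ` {p. Good n p}"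
proof (intro set_eqI iffI)
  fix w assume "w \<in> {w. w \<noteq> [] \<and> suffix (w @ w @ w) (trib_prefix n) \<and> \<not> sublist (w @ w @ w) (trib_prefix (n - 1))}"
  then have w0: "w \<noteq> []" and sf: "suffix (w @ w @ w) (pref n)" and ns: "\<not> sublist (w @ w @ w) (pref (n - 1))"
    by (auto simp: trib_prefix_pref)
  let ?p = "length w"
  have p1: "1 \<le> ?p" using w0 by (cases w) auto
  have l3: "length (w @ w @ w) = 3 * ?p" by simp
  have pn: "3 * ?p \<le> n" and e: "w @ w @ w = map xw [n - 3 * ?p..<n]"
    using sf unfolding suffix_pref l3 by simp_all
  have "n = n - 3 * ?p + 3 * ?p" using pn by simp
  then have "w @ w @ w = map xw [n - 3 * ?p..<n - 3 * ?p + 3 * ?p]" using e by simp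
  then have cl: "w = map xw [n - 3 * ?p..<n - 3 * ?p + ?p]" "per (n - 3 * ?p) ?p (2 * ?p)"
    using cube_list by blast+
  have "\<not> (\<exists>z. z + 3 * ?p \<le> n - 1 \<and> (\<forall>y<3 * ?p. xw (z + y) = xw (n - 3 * ?p + y)))"
  proof
    assume "\<exists>z. z + 3 * ?p \<le> n - 1 \<and> (\<forall>y<3 * ?p. xw (z + y) = xw (n - 3 * ?p + y))"
    then obtain z where z: "z + 3 * ?p \<le> n - 1" "\<forall>y<3 * ?p. xw (z + y) = xw (n - 3 * ?p + y)" by blast
    have "map xw [z..<z + 3 * ?p] = map xw [n - 3 * ?p..<n]"
      by (rule nth_equalityI) (use z(2) pn in auto)
    then have "sublist (w @ w @ w) (pref (n - 1))" unfolding sublist_pref using z(1) e by auto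
    then show False using ns by simp
  qed
  then have "Good n ?p" unfolding Good_def using p1 pn cl by simp
  then show "w \<in> (\<lambda>p. map xw [n - 3 * p..<n - 3 * p + p]) ` {p. Good n p}" using cl(1) by blast
next
  fix w assume "w \<in> (\<lambda>p. map xw [n - 3 * p..<n - 3 * p + p]) ` {p. Good n p}"
  then obtain p where G: "Good n p" and w: "w = map xw [n - 3 * p..<n - 3 * p + p]" by blast
  have p1: "1 \<le> p" and pn: "3 * p \<le> n" and pr: "per (n - 3 * p) p (2 * p)" using G by (auto simp: Good_def)
  have lw: "length w = p" using w by simp
  have w0: "w \<noteq> []" using lw p1 by auto
  have "w @ w @ w = map xw [n - 3 * p..<n - 3 * p + 3 * p]" using cube_list[of w "n - 3 * p"] w lw pr by simp
  then have e: "w @ w @ w = map xw [n - 3 * p..<n]" using pn by simp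
  have sf: "suffix (w @ w @ w) (pref n)" unfolding suffix_pref using e lw pn by simp
  have ns: "\<not> sublist (w @ w @ w) (pref (n - 1))"
  proof
    assume "sublist (w @ w @ w) (pref (n - 1))"
    then have "\<exists>z. z + length (w @ w @ w) \<le> n - 1 \<and> w @ w @ w = map xw [z..<z + length (w @ w @ w)]"
      using sublist_pref by blast
    moreover have l3p: "length (w @ w @ w) = 3 * p" using lw by simp
    ultimately obtain z where z: "z + 3 * p \<le> n - 1" "w @ w @ w = map xw [z..<z + 3 * p]"
      by metis
    have "\<forall>y<3 * p. xw (z + y) = xw (n - 3 * p + y)"
    proof (intro allI impI)
      fix y assume y: "y < 3 * p"
      have "xw (z + y) = (w @ w @ w) ! y" using z(2) y by simp
      also have "\<dots> = xw (n - 3 * p + y)" using e y pn by simp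
      finally show "xw (z + y) = xw (n - 3 * p + y)" .
    qed
    then show False using G z(1) by (auto simp: Good_def)
  qed
  show "w \<in> {w. w \<noteq> [] \<and> suffix (w @ w @ w) (trib_prefix n) \<and> \<not> sublist (w @ w @ w) (trib_prefix (n - 1))}"
    using w0 sf ns by (simp add: trib_prefix_pref)
qed

lemma disj: assumes "Aj a \<le> n" "n \<le> Ej a" "Aj b \<le> n" "n \<le> Ej b" shows "a = b"
proof (rule ccontr)
  assume "a \<noteq> b"
  then consider "a < b" | "b < a" by linarith
  then show False
  proof cases
    case 1 then have "Aj (Suc a) \<le> Aj b" by (simp add: Aj_mono)
    then show False using Ej_lt[of a] assms by linarith
  next
    case 2 then have "Aj (Suc b) \<le> Aj a" by (simp add: Aj_mono)
    then show False using Ej_lt[of b] assms by linarith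
  qed
qed

lemma count_eq: assumes "1 \<le> n"
  shows "cube_count n = (if \<exists>j\<ge>3. Aj j \<le> n \<and> n \<le> Ej j then 1 else 0)"
proof (cases "\<exists>j\<ge>3. Aj j \<le> n \<and> n \<le> Ej j")
  case True
  then obtain j where j: "3 \<le> j" "Aj j \<le> n" "n \<le> Ej j" by blast
  have "{p. Good n p} = {tn j}"
  proof (intro set_eqI iffI)
    fix p assume "p \<in> {p. Good n p}"
    then obtain j' where "3 \<le> j'" "p = tn j'" "Aj j' \<le> n" "n \<le> Ej j'" using Good_iff by auto
    then show "p \<in> {tn j}" using disj[of j' n j] j by simp
  next
    fix p assume "p \<in> {tn j}" then show "p \<in> {p. Good n p}" using Good_iff j by auto
  qed
  then show ?thesis using True unfolding cube_count_def S_eq[OF assms] by simp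
next
  case False
  then have e: "{p. Good n p} = {}" using Good_iff by auto
  show ?thesis using False unfolding cube_count_def S_eq[OF assms] e by simp
qed

lemma tnum_nat: "tnum (int k) = int (tn k)" by (simp add: tnum_def tn_def)

lemma tnum_vals: "tnum (-2) = 0" "tnum (-1) = 1" "tnum 0 = 1" "tnum 1 = 2" "tnum 2 = 4"
  "tnum 3 = 7" "tnum 4 = 13" "tnum 5 = 24" "tnum 6 = 44"
proof -
  show "tnum (-2) = 0" "tnum (-1) = 1" by (simp_all add: tnum_def)
  show "tnum 0 = 1" using tnum_nat[of 0] tn_0 by simp
  show "tnum 1 = 2" using tnum_nat[of 1] tn_1 by simp
  show "tnum 2 = 4" using tnum_nat[of 2] tn_2 by simp
  show "tnum 3 = 7" using tnum_nat[of 3] tn_vals by simp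
  show "tnum 4 = 13" using tnum_nat[of 4] tn_vals by simp
  show "tnum 5 = 24" using tnum_nat[of 5] tn_vals by simp
  show "tnum 6 = 44" using tnum_nat[of 6] tn_vals by simp
qed

lemma Aj_gt: "n < Aj n"
  using T_len[of "n+3"] by (simp add: Aj_def tn_def)

lemma exists_j: assumes "58 \<le> n" shows "\<exists>j\<ge>3. Aj j \<le> n \<and> n < Aj (Suc j)"
proof -
  define j0 where "j0 = (LEAST j. n < Aj j)"
  have ex: "\<exists>j. n < Aj j" using Aj_gt by blast
  have j0: "n < Aj j0" unfolding j0_def using ex by (rule LeastI_ex)
  have j03: "3 < j0"
  proof (rule ccontr)
    assume "\<not> 3 < j0" then have "Aj j0 \<le> Aj 3" by (simp add: Aj_mono)
    then show False using j0 Aj_3 assms by simp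
  qed
  then obtain j where j: "j0 = Suc j" by (cases j0) auto
  have "\<not> n < Aj j" using j j0_def not_less_Least by (metis lessI)
  then show ?thesis using j j0 j03 by (rule_tac x=j in exI) simp
qed

lemma tnum_at: "x = int k \<Longrightarrow> tnum x = int (tn k)" using tnum_nat by simp

lemma Aj_int: "int (Aj j) = tnum (int j + 4 - 1) + 2 * tnum (int j + 4 - 4)"
proof -
  have a: "tnum (int j + 4 - 1) = int (tn (j + 3))" by (rule tnum_at) simp
  have b: "tnum (int j + 4 - 4) = int (tn j)" by (rule tnum_at) simp
  show ?thesis unfolding a b by (simp add: Aj_def)
qed

lemma Aj_int2: "int (Aj (Suc j)) = tnum (int j + 4) + 2 * tnum (int j + 4 - 3)"
proof -
  have a: "tnum (int j + 4) = int (tn (Suc j + 3))" by (rule tnum_at) simp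
  have b: "tnum (int j + 4 - 3) = int (tn (Suc j))" by (rule tnum_at) simp
  show ?thesis unfolding a b by (simp add: Aj_def)
qed

lemma Ej_int: "int (Ej j) = tnum (int j + 4 - 1) + knum (nat (int j + 4 + 1)) - 2"
proof -
  have a: "tnum (int j + 4 - 1) = int (tn (j + 3))" by (rule tnum_at) simp
  have b: "nat (int j + 4 + 1) = j + 5" by simp
  have "int (kn (j + 5)) = knum (j + 5)" by (rule kn_int)
  moreover have "3 \<le> kn (j + 5)" by (rule kn_ge)
  ultimately show ?thesis unfolding a b by (simp add: Ej_def)
qed

lemma in_window: assumes "3 \<le> j" "Aj j \<le> n" "n < Aj (Suc j)"
  shows "(\<exists>j'\<ge>3. Aj j' \<le> n \<and> n \<le> Ej j') \<longleftrightarrow> n \<le> Ej j"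
proof
  assume "\<exists>j'\<ge>3. Aj j' \<le> n \<and> n \<le> Ej j'"
  then obtain j' where j': "3 \<le> j'" "Aj j' \<le> n" "n \<le> Ej j'" by blast
  have "j' = j"
  proof (rule ccontr)
    assume "j' \<noteq> j"
    then consider "j' < j" | "j < j'" by linarith
    then show False
    proof cases
      case 1 then have "Aj (Suc j') \<le> Aj j" by (simp add: Aj_mono)
      then show False using Ej_lt[of j'] j' assms by linarith
    next
      case 2 then have "Aj (Suc j) \<le> Aj j'" by (simp add: Aj_mono)
      then show False using j' assms by linarith
    qed
  qed
  then show "n \<le> Ej j" using j' by simp
next
  assume "n \<le> Ej j" then show "\<exists>j'\<ge>3. Aj j' \<le> n \<and> n \<le> Ej j'" using assms by blast
qed

theorem mainTheorem5:
  shows "(\<forall>n. 1 \<le> n \<and> n \<le> 57 \<longrightarrow> cube_count n = 0)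
    \<and> (\<forall>n::nat. n \<ge> 58 \<longrightarrow>
         (\<exists>m::int. m \<ge> 2 \<and> tnum (m - 1) + 2 * tnum (m - 4) \<le> int n
                    \<and> int n < tnum m + 2 * tnum (m - 3))
       \<and> (\<forall>m::int. m \<ge> 2 \<and> tnum (m - 1) + 2 * tnum (m - 4) \<le> int n
                    \<and> int n < tnum m + 2 * tnum (m - 3) \<longrightarrow>
              m \<ge> 7 \<and> (cube_count n = 1 \<longleftrightarrow> int n \<le> tnum (m - 1) + knum (nat (m + 1)) - 2)))"
proof (intro conjI allI impI)
  fix n :: nat assume n: "1 \<le> n \<and> n \<le> 57"
  have "\<not> (\<exists>j\<ge>3. Aj j \<le> n \<and> n \<le> Ej j)"
  proof
    assume "\<exists>j\<ge>3. Aj j \<le> n \<and> n \<le> Ej j"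
    then obtain j where "3 \<le> j" "Aj j \<le> n" by blast
    moreover have "Aj 3 \<le> Aj j" using \<open>3 \<le> j\<close> by (rule Aj_mono)
    ultimately show False using n Aj_3 by simp
  qed
  then show "cube_count n = 0" using count_eq n by simp
next
  fix n :: nat assume n: "58 \<le> n"
  obtain j where j: "3 \<le> j" "Aj j \<le> n" "n < Aj (Suc j)" using exists_j[OF n] by blast
  show "\<exists>m::int. m \<ge> 2 \<and> tnum (m - 1) + 2 * tnum (m - 4) \<le> int n \<and> int n < tnum m + 2 * tnum (m - 3)"
    using j Aj_int[of j] Aj_int2[of j] by (rule_tac x="int j + 4" in exI) simp
next
  fix n :: nat and m :: int
  assume n: "58 \<le> n"
  assume h: "m \<ge> 2 \<and> tnum (m - 1) + 2 * tnum (m - 4) \<le> int n \<and> int n < tnum m + 2 * tnum (m - 3)"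
  show m7: "m \<ge> 7"
  proof (rule ccontr)
    assume "\<not> m \<ge> 7"
    then have "m = 2 \<or> m = 3 \<or> m = 4 \<or> m = 5 \<or> m = 6" using h by auto
    then have "tnum m + 2 * tnum (m - 3) \<le> 58" using tnum_vals by auto
    then show False using h n by linarith
  qed
  define j where "j = nat (m - 4)"
  have mj: "m = int j + 4" using m7 j_def by simp
  have j3: "3 \<le> j" using m7 j_def by simp
  have w1: "Aj j \<le> n" using h Aj_int[of j] mj by simp
  have w2: "n < Aj (Suc j)" using h Aj_int2[of j] mj by simp
  have "cube_count n = 1 \<longleftrightarrow> n \<le> Ej j"
    using count_eq[of n] n in_window[OF j3 w1 w2] by simp
  also have "\<dots> \<longleftrightarrow> int n \<le> tnum (m - 1) + knum (nat (m + 1)) - 2"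
    unfolding mj by (simp only: Ej_int[symmetric] of_nat_le_iff)
  finally show "cube_count n = 1 \<longleftrightarrow> int n \<le> tnum (m - 1) + knum (nat (m + 1)) - 2" .
qed

end
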